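(* Let $\gamma\ge0$, $\sigma_0>0$, let $S$ be the real zero-mean Gaussian generalized random field solving $(-\Delta)^{\gamma/2}S=W$ with $W$ Gaussian white noise on $\mathbb{R}^2$ of variance $\sigma_0^2$, let $J\in L_2(\mathbb{R}^2)$ be real-valued, $\theta^*\in[0,2\pi)$, and $I(\mathbf{x})=J(\mathbf{R}_{-\theta^*}\mathbf{x})+S(\mathbf{x})$. Let $\hat h$ be a real-valued radial profile with $\hat h(\omega)=0$ for $\omega\notin(\pi/4,\pi]$, and for $n,i\in\mathbb{Z}$ define the circular harmonic wavelets $\xi_{n,i}$ by $\hat\xi_{n,i}(\omega,\varphi)=2^i\hat h(2^i\omega)\mathrm{e}^{\mathrm{j}n\varphi}$, with measurements $q_{n,i}=\langle I,\xi_{n,i}\rangle$ and rescaled measurements $\tilde q_{n,i}=2^{-i\gamma}q_{n,i}$. Set $$b_z=\frac{1}{2\pi}\int_0^\infty\omega^z\hat h(\omega)^2\,\omega\,\mathrm{d}\omega,\quad d_z=\frac{1}{2\pi}\int_0^\infty\omega^z\hat h(\omega)\hat h(2\omega)\,\omega\,\mathrm{d}\omega,\quad B=\sigma_0^2b_{-2\gamma},\quad D=\sigma_0^2\,2^{1-\gamma}d_{-2\gamma}.$$ Then the covariance matrix $\mathbf{C}[(n,i),(m,k)]=\mathbb{E}\big[(\tilde q_{n,i}-\mathbb{E}\tilde q_{n,i})\overline{(\tilde q_{m,k}-\mathbb{E}\tilde q_{m,k})}\big]$ of $(\tilde q_{n,i})_{n,i\in\mathbb{Z}}$ is $$\mathbf{C}[(n,i),(m,k)]=\begin{cases}B,&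 m=n,\ k=i,\\ D,& m=n,\ |k-i|=1,\\ 0,&\text{otherwise.}\end{cases}$$
   Context: Fourier transform $\hat f(\boldsymbol\omega)=\int f(\mathbf{x})\mathrm{e}^{-\mathrm{j}\langle\mathbf{x},\boldsymbol\omega\rangle}\mathrm{d}\mathbf{x}$, polar coordinates $(\omega,\varphi)$ in frequency; $\mathbf{R}_{\theta_0}$ is rotation by $\theta_0$; $\langle f,g\rangle=\int_{\mathbb{R}^2}fg$. For suitable test functions $f,g$ the noise satisfies $\mathbb{E}[\langle S,f\rangle\overline{\langle S,g\rangle}]=\frac{\sigma_0^2}{(2\pi)^2}\int_0^\infty\int_0^{2\pi}\omega^{-2\gamma}\hat f(\omega,\varphi)\overline{\hat g(\omega,\varphi)}\,\mathrm{d}\varphi\,\omega\,\mathrm{d}\omega$; the integrals defining the covariances are assumed finite. *)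

theory Defs
  imports "HOL-Probability.Probability"
begin

definition fourier2 :: "(real^2 \<Rightarrow> complex) \<Rightarrow> real^2 \<Rightarrow> complex" where
  "fourier2 f w = (LINT x|lborel. f x * exp (- \<i> * complex_of_real (x \<bullet> w)))"

definition polar2 :: "real \<Rightarrow> real \<Rightarrow> real^2" where
  "polar2 r \<phi> = vector [r * cos \<phi>, r * sin \<phi>]"

definition rot2 :: "real \<Rightarrow> real^2 \<Rightarrow> real^2" where
  "rot2 \<theta> x = vector [cos \<theta> * x$1 - sin \<theta> * x$2, sin \<theta> * x$1 + cos \<theta> * x$2]"

definition pair2 :: "(real^2 \<Rightarrow> complex) \<Rightarrow> (real^2 \<Rightarrow> complex) \<Rightarrow> complex" where
  "pair2 f g = (LINT x|lborel. f x * g x)"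

definition bconst :: "(real \<Rightarrow> real) \<Rightarrow> real \<Rightarrow> real" where
  "bconst h z = 1 / (2*pi) * (LINT w:{0<..}|lborel. w powr z * (h w)^2 * w)"

definition dconst :: "(real \<Rightarrow> real) \<Rightarrow> real \<Rightarrow> real" where
  "dconst h z = 1 / (2*pi) * (LINT w:{0<..}|lborel. w powr z * h w * h (2*w) * w)"

definition noise_cov :: "real \<Rightarrow> real \<Rightarrow> (real^2 \<Rightarrow> complex) \<Rightarrow> (real^2 \<Rightarrow> complex) \<Rightarrow> complex" where
  "noise_cov \<sigma>0 \<gamma> f g = complex_of_real (\<sigma>0^2 / (2*pi)^2) *
     (LINT r:{0<..}|lborel.
        (LINT \<phi>:{0..2*pi}|lborel. complex_of_real (r powr (-2*\<gamma>)) *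
            fourier2 f (polar2 r \<phi>) * cnj (fourier2 g (polar2 r \<phi>))) * complex_of_real r)"

end

theory Submission
  imports Defs
begin

lemma le_1_sq: "(t::real) \<le> 1 + t^2"
proof -
  have "0 \<le> (t - 1/2)^2" by simp
  then show ?thesis by (simp add: power2_eq_square algebra_simps)
qed

lemma circ:
  fixes k :: int
  shows "(LINT \<phi>:{0..2*pi}|lborel. exp (\<i> * complex_of_real (real_of_int k * \<phi>))) = (if k = 0 then complex_of_real (2*pi) else 0)"
proof (cases "k = 0")
  case True
  then show ?thesis by (simp add: set_integral_const scaleR_conv_of_real)
next
  case False
  have "(LBINT x=ereal 0..ereal (2*pi). exp (\<i> * complex_of_real (real_of_int k * x))) =
     (- \<i> / of_int k) * exp (\<i> * complex_of_real (real_of_int k * (2*pi))) - (- \<i> / of_int k) * exp (\<i> * complex_of_real (real_of_int k * 0))"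
  proof (rule interval_integral_FTC_finite)
    show "continuous_on {min 0 (2 * pi)..max 0 (2 * pi)} (\<lambda>x. exp (\<i> * complex_of_real (real_of_int k * x)))"
      by (intro continuous_intros)
    fix x :: real
    have "((\<lambda>x. iexp (real_of_int k * x)) has_vector_derivative (\<i> * iexp (real_of_int k * x)) * of_int k) (at x within {min 0 (2 * pi)..max 0 (2 * pi)})"
      by (auto intro!: derivative_eq_intros simp: Re_exp Im_exp has_vector_derivative_complex_iff)
    then have dd: "((\<lambda>x. (- \<i> / of_int k) * iexp (real_of_int k * x)) has_vector_derivative (- \<i> / of_int k) * ((\<i> * iexp (real_of_int k * x)) * of_int k)) (at x within {min 0 (2 * pi)..max 0 (2 * pi)})"
      by (rule has_vector_derivative_mult_right)
    show "((\<lambda>x. (- \<i> / of_int k) * exp (\<i> * complex_of_real (real_of_int k * x))) has_vector_derivative exp (\<i> * complex_of_real (real_of_int k * x))) (at x within {min 0 (2 * pi)..max 0 (2 * pi)})"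
    proof -
      have "(- \<i> / of_int k) * ((\<i> * iexp (real_of_int k * x)) * of_int k) = iexp (real_of_int k * x)"
        using False by (simp add: field_simps)
      then show ?thesis using dd by simp
    qed
  qed
  moreover have "exp (\<i> * complex_of_real (real_of_int k * (2*pi))) = 1"
  proof -
    have "\<i> * complex_of_real (real_of_int k * (2*pi)) = (2*pi*\<i>) * of_int k" by (simp add: algebra_simps)
    then show ?thesis using exp_integer_2pi[of "of_int k"] by (simp add: mult_ac)
  qed
  moreover have "(LBINT x=ereal 0..ereal (2*pi). exp (\<i> * complex_of_real (real_of_int k * x))) = (LINT \<phi>:{0..2*pi}|lborel. exp (\<i> * complex_of_real (real_of_int k * \<phi>)))"
    by (rule interval_integral_Icc) simp
  ultimately show ?thesis using False by simp
qed
lemma scale_int: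
  fixes F :: "real \<Rightarrow> real" and c :: real
  assumes c: "c > 0"
  shows "(LINT w:{0<..}|lborel. F w) = c * (LINT x:{0<..}|lborel. F (c*x))"
proof -
  have "(LINT w:{0<..}|lborel. F w) = (\<integral>w. indicator {0<..} w *\<^sub>R F w \<partial>lborel)"
    by (simp add: set_lebesgue_integral_def)
  also have "\<dots> = \<bar>c\<bar> *\<^sub>R (\<integral>x. indicator {0<..} (0 + c*x) *\<^sub>R F (0 + c*x) \<partial>lborel)"
    using c by (intro lborel_integral_real_affine) simp
  also have "(\<lambda>x. indicator {0<..} (0 + c*x) *\<^sub>R F (0 + c*x)) = (\<lambda>x. indicator {0<..} x *\<^sub>R F (c*x))"
    using c by (auto simp: indicator_def zero_less_mult_iff)
  finally show ?thesis using c by (simp add: set_lebesgue_integral_def)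
qed

lemma set_int_of_real:
  "(LINT x:A|M. complex_of_real (g x)) = complex_of_real (LINT x:A|M. g x)"
  unfolding set_lebesgue_integral_def
  by (simp add: scaleR_conv_of_real flip: integral_complex_of_real)

lemma pw_same:
  fixes h :: "real \<Rightarrow> real" and i :: int and \<gamma> r :: real
  assumes r: "r > 0"
  shows "r powr (-2*\<gamma>) * (2 powr i * h (2 powr i * r)) * (2 powr i * h (2 powr i * r)) * r
    = 2 powr (i*(1+2*\<gamma>)) * ((2 powr i * r) powr (-2*\<gamma>) * (h (2 powr i * r))^2 * (2 powr i * r))"
proof -
  have "(2 powr i * r) powr (-2*\<gamma>) = 2 powr (i*(-2*\<gamma>)) * r powr (-2*\<gamma>)"
    using r by (simp add: powr_mult powr_powr)
  moreover have "2 powr (i*(1+2*\<gamma>)) * 2 powr (i*(-2*\<gamma>)) * 2 powr i = 2 powr i * 2 powr i"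
    by (simp add: powr_add[symmetric] algebra_simps)
  ultimately show ?thesis by (simp add: power2_eq_square algebra_simps)
qed

lemma pw_adj:
  fixes h :: "real \<Rightarrow> real" and i :: int and \<gamma> r :: real
  assumes r: "r > 0"
  shows "r powr (-2*\<gamma>) * (2 powr i * h (2 powr i * r)) * (2 powr (real_of_int (i+1)) * h (2 powr (real_of_int (i+1)) * r)) * r
    = 2 powr (i*(1+2*\<gamma>)+1) * ((2 powr i * r) powr (-2*\<gamma>) * h (2 powr i * r) * h (2 * (2 powr i * r)) * (2 powr i * r))"
proof -
  have e: "2 powr (real_of_int (i+1)) = 2 * 2 powr i" by (simp add: powr_add)
  have "(2 powr i * r) powr (-2*\<gamma>) = 2 powr (i*(-2*\<gamma>)) * r powr (-2*\<gamma>)"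
    using r by (simp add: powr_mult powr_powr)
  moreover have "2 powr (i*(1+2*\<gamma>)+1) * 2 powr (i*(-2*\<gamma>)) * 2 powr i = 2 * 2 powr i * 2 powr i"
    by (simp add: powr_add[symmetric] algebra_simps)
      (simp add: powr_add)
  moreover have "2 powr (i*(1+2*\<gamma>)+1) = 2 * 2 powr (i*(1+2*\<gamma>))" by (simp add: powr_add)
  ultimately show ?thesis unfolding e by (simp add: algebra_simps)
qed

lemma scale_inv:
  fixes F :: "real \<Rightarrow> real" and i :: int
  shows "(LINT x:{0<..}|lborel. F (2 powr (real_of_int i) * x)) = 2 powr (- real_of_int i) * (LINT w:{0<..}|lborel. F w)"
proof -
  have "(LINT w:{0<..}|lborel. F w) = 2 powr (real_of_int i) * (LINT x:{0<..}|lborel. F (2 powr (real_of_int i)*x))"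
    by (rule scale_int) simp
  then show ?thesis by (simp add: powr_minus field_simps)
qed
lemma int_same:
  fixes h :: "real \<Rightarrow> real" and i :: int and \<gamma> :: real
  shows "(LINT r:{0<..}|lborel. r powr (-2*\<gamma>) * (2 powr i * h (2 powr i * r)) * (2 powr i * h (2 powr i * r)) * r)
    = 2 powr (2*i*\<gamma>) * (LINT w:{0<..}|lborel. w powr (-2*\<gamma>) * (h w)^2 * w)"
proof -
  define H where "H = (\<lambda>w::real. w powr (-2*\<gamma>) * (h w)^2 * w)"
  have A: "(LINT r:{0<..}|lborel. r powr (-2*\<gamma>) * (2 powr i * h (2 powr i * r)) * (2 powr i * h (2 powr i * r)) * r)
     = (LINT r:{0<..}|lborel. 2 powr (i*(1+2*\<gamma>)) * H (2 powr i * r))"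
    apply (rule set_lebesgue_integral_cong)
     apply simp
    apply (intro allI impI)
    unfolding H_def
    apply (rule pw_same)
    apply simp
    done
  have Y: "2 powr (i*(1+2*\<gamma>)) * 2 powr (- real_of_int i) = 2 powr (2*i*\<gamma>)"
    by (simp only: powr_add[symmetric]) (simp add: algebra_simps)
  have "(LINT r:{0<..}|lborel. r powr (-2*\<gamma>) * (2 powr i * h (2 powr i * r)) * (2 powr i * h (2 powr i * r)) * r)
     = 2 powr (i*(1+2*\<gamma>)) * (LINT r:{0<..}|lborel. H (2 powr i * r))"
    unfolding A by (rule set_integral_mult_right)
  also have "\<dots> = 2 powr (i*(1+2*\<gamma>)) * (2 powr (- real_of_int i) * (LINT w:{0<..}|lborel. H w))"
    unfolding scale_inv ..
  also have "\<dots> = (2 powr (i*(1+2*\<gamma>)) * 2 powr (- real_of_int i)) * (LINT w:{0<..}|lborel. H w)"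
    by (rule mult.assoc[symmetric])
  also have "\<dots> = 2 powr (2*i*\<gamma>) * (LINT w:{0<..}|lborel. w powr (-2*\<gamma>) * (h w)^2 * w)"
    unfolding Y H_def ..
  finally show ?thesis .
qed
lemma int_adj:
  fixes h :: "real \<Rightarrow> real" and i :: int and \<gamma> :: real
  shows "(LINT r:{0<..}|lborel. r powr (-2*\<gamma>) * (2 powr i * h (2 powr i * r)) * (2 powr (real_of_int (i+1)) * h (2 powr (real_of_int (i+1)) * r)) * r)
    = 2 powr (2*i*\<gamma>+1) * (LINT w:{0<..}|lborel. w powr (-2*\<gamma>) * h w * h (2*w) * w)"
proof -
  define H where "H = (\<lambda>w::real. w powr (-2*\<gamma>) * h w * h (2*w) * w)"
  have A: "(LINT r:{0<..}|lborel. r powr (-2*\<gamma>) * (2 powr i * h (2 powr i * r)) * (2 powr (real_of_int (i+1)) * h (2 powr (real_of_int (i+1)) * r)) * r)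
     = (LINT r:{0<..}|lborel. 2 powr (i*(1+2*\<gamma>)+1) * H (2 powr i * r))"
    apply (rule set_lebesgue_integral_cong)
     apply simp
    apply (intro allI impI)
    unfolding H_def
    apply (rule pw_adj)
    apply simp
    done
  have Y: "2 powr (i*(1+2*\<gamma>)+1) * 2 powr (- real_of_int i) = 2 powr (2*i*\<gamma>+1)"
    by (simp only: powr_add[symmetric]) (simp add: algebra_simps)
  have "(LINT r:{0<..}|lborel. r powr (-2*\<gamma>) * (2 powr i * h (2 powr i * r)) * (2 powr (real_of_int (i+1)) * h (2 powr (real_of_int (i+1)) * r)) * r)
     = 2 powr (i*(1+2*\<gamma>)+1) * (LINT r:{0<..}|lborel. H (2 powr i * r))"
    unfolding A by (rule set_integral_mult_right)
  also have "\<dots> = 2 powr (i*(1+2*\<gamma>)+1) * (2 powr (- real_of_int i) * (LINT w:{0<..}|lborel. H w))"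
    unfolding scale_inv ..
  also have "\<dots> = (2 powr (i*(1+2*\<gamma>)+1) * 2 powr (- real_of_int i)) * (LINT w:{0<..}|lborel. H w)"
    by (rule mult.assoc[symmetric])
  also have "\<dots> = 2 powr (2*i*\<gamma>+1) * (LINT w:{0<..}|lborel. w powr (-2*\<gamma>) * h w * h (2*w) * w)"
    unfolding Y H_def ..
  finally show ?thesis .
qed

lemma disj:
  fixes h :: "real \<Rightarrow> real" and i k :: int
  assumes h_supp: "\<And>w. w \<notin> {pi/4<..pi} \<Longrightarrow> h w = 0"
    and ik: "k \<ge> i + 2" and r: "r > 0"
  shows "h (2 powr i * r) * h (2 powr k * r) = 0"
proof (rule ccontr)
  assume "h (2 powr i * r) * h (2 powr k * r) \<noteq> 0"
  hence "h (2 powr i * r) \<noteq> 0" "h (2 powr k * r) \<noteq> 0" by auto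
  hence "2 powr i * r \<in> {pi/4<..pi}" "2 powr k * r \<in> {pi/4<..pi}" using h_supp by blast+
  hence a: "2 powr i * r > pi/4" and b: "2 powr k * r \<le> pi" by auto
  have e: "2 powr (real_of_int k) = 2 powr (real_of_int (k - i)) * 2 powr (real_of_int i)"
    by (subst powr_add[symmetric]) simp
  have "2 powr (real_of_int (k - i)) \<ge> 2 powr (2::real)"
    using ik by (intro powr_mono) auto
  hence f: "2 powr (real_of_int (k - i)) \<ge> 4" by simp
  have "2 powr k * r \<ge> 4 * (2 powr i * r)"
    unfolding e using f r by (simp add: mult_right_mono mult.assoc)
  with a b show False by simp
qed

theorem proposition3:
  fixes M :: "'a measure"
    and S :: "(real^2 \<Rightarrow> complex) \<Rightarrow> 'a \<Rightarrow> complex"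
    and T :: "(real^2 \<Rightarrow> complex) set"
    and J :: "real^2 \<Rightarrow> real"
    and h :: "real \<Rightarrow> real"
    and \<xi> :: "int \<Rightarrow> int \<Rightarrow> real^2 \<Rightarrow> complex"
    and \<gamma> \<sigma>0 \<theta> :: real
  assumes gamma: "\<gamma> \<ge> 0" and sigma: "\<sigma>0 > 0"
    and theta: "\<theta> \<in> {0..<2*pi}"
    and J_L2: "J \<in> borel_measurable lborel" "integrable lborel (\<lambda>x. (J x)^2)"
    and M: "prob_space M"
    and S_meas: "\<And>f. f \<in> T \<Longrightarrow> S f \<in> borel_measurable M"
    and S_sq: "\<And>f. f \<in> T \<Longrightarrow> integrable M (\<lambda>x. (cmod (S f x))^2)"
    and S_mean: "\<And>f. f \<in> T \<Longrightarrow> prob_space.expectation M (S f) = 0"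
    and S_cov: "\<And>f g. f \<in> T \<Longrightarrow> g \<in> T \<Longrightarrow>
                   prob_space.expectation M (\<lambda>x. S f x * cnj (S g x)) = noise_cov \<sigma>0 \<gamma> f g"
    and h_meas: "h \<in> borel_measurable lborel"
    and h_supp: "\<And>w. w \<notin> {pi/4<..pi} \<Longrightarrow> h w = 0"
    and h_fin: "set_integrable lborel {0<..} (\<lambda>w. w powr (-2*\<gamma>) * (h w)^2 * w)"
    and xi_hat: "\<And>n i r \<phi>. r \<ge> 0 \<Longrightarrow> fourier2 (\<xi> n i) (polar2 r \<phi>) =
                   complex_of_real (2 powr (real_of_int i) * h (2 powr (real_of_int i) * r))
                   * exp (\<i> * complex_of_real (real_of_int n * \<phi>))"
    and xi_T: "\<And>n i. \<xi> n i \<in> T"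
  defines "qt \<equiv> \<lambda>n i x. complex_of_real (2 powr (- real_of_int i * \<gamma>)) *
              (pair2 (\<lambda>y. complex_of_real (J (rot2 (-\<theta>) y))) (\<xi> n i) + S (\<xi> n i) x)"
    and "B \<equiv> \<sigma>0^2 * bconst h (-2*\<gamma>)"
    and "D \<equiv> \<sigma>0^2 * 2 powr (1 - \<gamma>) * dconst h (-2*\<gamma>)"
  shows "\<forall>n i m k.
     prob_space.expectation M (\<lambda>x.
        (qt n i x - prob_space.expectation M (qt n i)) *
        cnj (qt m k x - prob_space.expectation M (qt m k)))
     = (if m = n \<and> k = i then complex_of_real B
        else if m = n \<and> \<bar>k - i\<bar> = 1 then complex_of_real D
        else 0)"
  proof (intro allI)
  fix n i m k :: int
  interpret P: prob_space M by (rule M)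
  define c where "c = (\<lambda>i::int. 2 powr (- real_of_int i * \<gamma>))"
  define Pc where "Pc = (\<lambda>n i. pair2 (\<lambda>y. complex_of_real (J (rot2 (-\<theta>) y))) (\<xi> n i))"
  define G where "G = (\<lambda>i k r. r powr (-2*\<gamma>) * (2 powr (real_of_int i) * h (2 powr (real_of_int i) * r)) * (2 powr (real_of_int k) * h (2 powr (real_of_int k) * r)) * r)"
  have intS: "integrable M (S (\<xi> n i))" for n i
  proof (rule Bochner_Integration.integrable_bound[where f="\<lambda>x. 1 + (cmod (S (\<xi> n i) x))^2"])
    show "integrable M (\<lambda>x. 1 + (cmod (S (\<xi> n i) x))^2)" using S_sq[OF xi_T] by simp
    show "S (\<xi> n i) \<in> borel_measurable M" using S_meas[OF xi_T] .
    show "AE x in M. norm (S (\<xi> n i) x) \<le> norm (1 + (cmod (S (\<xi> n i) x))^2)"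
    proof (rule AE_I2)
      fix x
      have "cmod (S (\<xi> n i) x) \<le> 1 + (cmod (S (\<xi> n i) x))^2" by (rule le_1_sq)
      then show "norm (S (\<xi> n i) x) \<le> norm (1 + (cmod (S (\<xi> n i) x))^2)" by simp
    qed
  qed
  have Eq: "P.expectation (qt n i) = complex_of_real (c i) * Pc n i" for n i
  proof -
    have "P.expectation (qt n i) = complex_of_real (c i) * P.expectation (\<lambda>x. Pc n i + S (\<xi> n i) x)"
      unfolding qt_def c_def Pc_def by simp
    also have "P.expectation (\<lambda>x. Pc n i + S (\<xi> n i) x) = P.expectation (\<lambda>x. Pc n i) + P.expectation (S (\<xi> n i))"
      by (rule Bochner_Integration.integral_add) (simp_all add: intS)
    finally show ?thesis using S_mean[OF xi_T] by (simp add: P.prob_space)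
  qed
  have Dq: "qt n i x - P.expectation (qt n i) = complex_of_real (c i) * S (\<xi> n i) x" for n i x
    unfolding Eq by (simp add: qt_def c_def Pc_def algebra_simps)
  have E1: "P.expectation (\<lambda>x. (qt n i x - P.expectation (qt n i)) * cnj (qt m k x - P.expectation (qt m k)))
     = complex_of_real (c i * c k) * noise_cov \<sigma>0 \<gamma> (\<xi> n i) (\<xi> m k)"
  proof -
    have "(\<lambda>x. (qt n i x - P.expectation (qt n i)) * cnj (qt m k x - P.expectation (qt m k)))
       = (\<lambda>x. complex_of_real (c i * c k) * (S (\<xi> n i) x * cnj (S (\<xi> m k) x)))"
      unfolding Dq by (simp add: mult_ac)
    then show ?thesis using S_cov[OF xi_T xi_T] by simp
  qed
  have inner: "(LINT \<phi>:{0..2*pi}|lborel. complex_of_real (r powr (-2*\<gamma>)) *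
            fourier2 (\<xi> n i) (polar2 r \<phi>) * cnj (fourier2 (\<xi> m k) (polar2 r \<phi>))) * complex_of_real r
       = complex_of_real (G i k r) * (if n = m then complex_of_real (2*pi) else 0)" if r: "r > 0" for r
  proof -
    have "(\<lambda>\<phi>. complex_of_real (r powr (-2*\<gamma>)) *
            fourier2 (\<xi> n i) (polar2 r \<phi>) * cnj (fourier2 (\<xi> m k) (polar2 r \<phi>)))
       = (\<lambda>\<phi>. complex_of_real (r powr (-2*\<gamma>) * (2 powr (real_of_int i) * h (2 powr (real_of_int i) * r)) * (2 powr (real_of_int k) * h (2 powr (real_of_int k) * r)))
            * exp (\<i> * complex_of_real (real_of_int (n - m) * \<phi>)))"
    proof
      fix \<phi>
      have ex: "exp (\<i> * complex_of_real (real_of_int n * \<phi>)) * cnj (exp (\<i> * complex_of_real (real_of_int m * \<phi>)))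
          = exp (\<i> * complex_of_real (real_of_int (n - m) * \<phi>))"
        by (simp add: exp_cnj exp_add[symmetric] algebra_simps)
      show "complex_of_real (r powr (-2*\<gamma>)) *
            fourier2 (\<xi> n i) (polar2 r \<phi>) * cnj (fourier2 (\<xi> m k) (polar2 r \<phi>)) =
            complex_of_real (r powr (-2*\<gamma>) * (2 powr (real_of_int i) * h (2 powr (real_of_int i) * r)) * (2 powr (real_of_int k) * h (2 powr (real_of_int k) * r)))
            * exp (\<i> * complex_of_real (real_of_int (n - m) * \<phi>))"
        using r ex by (simp add: xi_hat mult_ac)
    qed
    then show ?thesis using circ[of "n - m"] by (simp add: G_def)
  qed
  have NC: "noise_cov \<sigma>0 \<gamma> (\<xi> n i) (\<xi> m k) = complex_of_real (\<sigma>0^2 / (2*pi)^2) *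
      (LINT r:{0<..}|lborel. complex_of_real (G i k r) * (if n = m then complex_of_real (2*pi) else 0))"
    unfolding noise_cov_def
    apply (rule arg_cong[where f="\<lambda>z. complex_of_real (\<sigma>0^2 / (2*pi)^2) * z"])
    apply (rule set_lebesgue_integral_cong)
     apply simp
    apply (intro allI impI)
    apply (rule inner)
    apply simp
    done
  show "P.expectation (\<lambda>x. (qt n i x - P.expectation (qt n i)) * cnj (qt m k x - P.expectation (qt m k)))
     = (if m = n \<and> k = i then complex_of_real B
        else if m = n \<and> \<bar>k - i\<bar> = 1 then complex_of_real D
        else 0)"
  proof (cases "m = n")
    case False
    then show ?thesis unfolding E1 NC by simp
  next
    case True
    have NC2: "noise_cov \<sigma>0 \<gamma> (\<xi> n i) (\<xi> m k) = complex_of_real (\<sigma>0^2 / (2*pi) * (LINT r:{0<..}|lborel. G i k r))"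
      unfolding NC using True by (simp add: set_int_of_real power2_eq_square)
    have L: "P.expectation (\<lambda>x. (qt n i x - P.expectation (qt n i)) * cnj (qt m k x - P.expectation (qt m k)))
       = complex_of_real (c i * c k * (\<sigma>0^2 / (2*pi) * (LINT r:{0<..}|lborel. G i k r)))"
      unfolding E1 NC2 by simp
    show ?thesis
    proof (cases "k = i")
      case True2: True
      have "c i * c k * (\<sigma>0^2 / (2*pi) * (LINT r:{0<..}|lborel. G i k r)) = B"
      proof -
        have I: "(LINT r:{0<..}|lborel. G i k r) = 2 powr (2*i*\<gamma>) * (LINT w:{0<..}|lborel. w powr (-2*\<gamma>) * (h w)^2 * w)"
          unfolding G_def True2 by (rule int_same)
        have cc: "c i * c k * 2 powr (2*i*\<gamma>) = 1"
          unfolding c_def True2 by (simp only: powr_add[symmetric]) (simp add: algebra_simps)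
        show ?thesis unfolding I B_def bconst_def using cc
          by (simp add: field_simps)
      qed
      then show ?thesis unfolding L using True True2 by simp
    next
      case False2: False
      show ?thesis
      proof (cases "k = i + 1")
        case True3: True
        have "c i * c k * (\<sigma>0^2 / (2*pi) * (LINT r:{0<..}|lborel. G i k r)) = D"
        proof -
          have I: "(LINT r:{0<..}|lborel. G i k r) = 2 powr (2*i*\<gamma>+1) * (LINT w:{0<..}|lborel. w powr (-2*\<gamma>) * h w * h (2*w) * w)"
            unfolding G_def True3 by (rule int_adj)
          have cc: "c i * c k * 2 powr (2*i*\<gamma>+1) = 2 powr (1 - \<gamma>)"
            unfolding c_def True3 by (simp only: powr_add[symmetric]) (simp add: algebra_simps)
          show ?thesis unfolding I D_def dconst_def using cc
            by (simp add: field_simps)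
        qed
        then show ?thesis unfolding L using True True3 by simp
      next
        case False3: False
        show ?thesis
        proof (cases "i = k + 1")
          case True4: True
          have "c i * c k * (\<sigma>0^2 / (2*pi) * (LINT r:{0<..}|lborel. G i k r)) = D"
          proof -
            have "(LINT r:{0<..}|lborel. G i k r) = (LINT r:{0<..}|lborel. G k i r)"
              unfolding G_def by (simp add: mult_ac)
            also have "\<dots> = 2 powr (2*k*\<gamma>+1) * (LINT w:{0<..}|lborel. w powr (-2*\<gamma>) * h w * h (2*w) * w)"
              unfolding G_def True4 by (rule int_adj)
            finally have I: "(LINT r:{0<..}|lborel. G i k r) = 2 powr (2*k*\<gamma>+1) * (LINT w:{0<..}|lborel. w powr (-2*\<gamma>) * h w * h (2*w) * w)" .
            have cc: "c i * c k * 2 powr (2*k*\<gamma>+1) = 2 powr (1 - \<gamma>)"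
              unfolding c_def True4 by (simp only: powr_add[symmetric]) (simp add: algebra_simps)
            show ?thesis unfolding I D_def dconst_def using cc
              by (simp add: field_simps)
          qed
          then show ?thesis unfolding L using True True4 by simp
        next
          case False4: False
          have far: "k \<ge> i + 2 \<or> i \<ge> k + 2" using False2 False3 False4 by linarith
          have Gz:  "\<forall>r. r \<in> {0<..} \<longrightarrow> G i k r = 0"
          proof (intro allI impI)
            fix r :: real assume "r \<in> {0<..}"
            hence r: "r > 0" by simp
            have "h (2 powr i * r) * h (2 powr k * r) = 0"
              using far
            proof
              assume "k \<ge> i + 2" then show ?thesis using disj[where h=h and i=i and k=k, OF h_supp _ r] by blast
            next
              assume "i \<ge> k + 2" then show ?thesis using disj[where h=h and i=k and k=i, OF h_supp _ r] by (simp add: mult.commute)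
            qed
            then show "G i k r = 0" unfolding G_def by (simp add: mult_ac)
          qed
          have "(\<lambda>r. indicator {0<..} r *\<^sub>R G i k r) = (\<lambda>r. 0)"
            using Gz by (auto simp: indicator_def)
          then have "(LINT r:{0<..}|lborel. G i k r) = 0" by (simp add: set_lebesgue_integral_def)
          moreover have "\<not> (m = n \<and> k = i)" "\<not> (m = n \<and> \<bar>k - i\<bar> = 1)" using False2 False3 False4 by auto
          ultimately show ?thesis unfolding L by auto
        qed
      qed
    qed
  qed
qed

end
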